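(* Let $0 < x < a$ and $w\in\mathbb{C}$ with $\mathrm{Re}[w]>0$. Then $$Z_\uparrow(w;x,a):=\mathbb{E}_x\big[\mathrm{e}^{-w\tau_{\uparrow a}(x)}\big]=\frac{Z_\uparrow(w;0,a)}{Z_\uparrow(w;0,x)},$$ where, for every $y>0$, $$Z_\uparrow(w;0,y):=\mathbb{E}_0\big[\mathrm{e}^{-w\tau_{\uparrow y}(0)}\big]=\frac{1}{1+w\sum_{n=1}^\infty \frac{y^n}{n!}\prod_{i=1}^{n-1}\big(w+\lambda-\lambda p^i\big)}.$$
   Context: Fix $\lambda>0$ and $p\in(0,1)$. The additive-increase multiplicative-decrease process $X=(X_t)_{t\ge0}$ started at $X_0=x\ge 0$ is defined as follows. Let $T_1<T_2<\cdots$ be the epochs of a Poisson process of rate $\lambda$. Between jump epochs, $X$ increases linearly with slope $1$, i.e. $\mathrm{d}X_t=\mathrm{d}t$. At each epoch $T_i$ the process jumps down to $X_{T_i}=pX_{T_i-}$. $\mathbb{P}_x,\mathbb{E}_x$ denote probability and expectation when $X_0=x$. For $a> x$, $\tau_{\uparrow a}(x)=\inf\{t\ge0: X_t>a\}$ under $X_0=x$ (upward first passage time). *)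

theory Defs
  imports "HOL-Probability.Probability"
begin

text \<open>Sample space: i.i.d. Exp(lam) inter-arrival times of the Poisson process.\<close>
definition aimd_space :: "real \<Rightarrow> (nat \<Rightarrow> real) measure" where
  "aimd_space lam = PiM UNIV (\<lambda>_::nat. density lborel (exponential_density lam))"

definition aimd_T :: "(nat \<Rightarrow> real) \<Rightarrow> nat \<Rightarrow> real" where
  "aimd_T e k = (\<Sum>i<k. e i)"

text \<open>Post-jump values: Y 0 = x, Y (k+1) = p * X(T (k+1) -).\<close>
fun aimd_Y :: "real \<Rightarrow> real \<Rightarrow> (nat \<Rightarrow> real) \<Rightarrow> nat \<Rightarrow> real" where
  "aimd_Y p x e 0 = x"
| "aimd_Y p x e (Suc k) = p * (aimd_Y p x e k + e k)"

text \<open>Path of the AIMD process started at x (cadlag).\<close>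
definition aimd_X :: "real \<Rightarrow> real \<Rightarrow> (nat \<Rightarrow> real) \<Rightarrow> real \<Rightarrow> real" where
  "aimd_X p x e t = (let k = (LEAST k. t < aimd_T e (Suc k)) in aimd_Y p x e k + (t - aimd_T e k))"

definition tau_up :: "real \<Rightarrow> real \<Rightarrow> real \<Rightarrow> (nat \<Rightarrow> real) \<Rightarrow> real" where
  "tau_up p x a e = Inf {t. 0 \<le> t \<and> aimd_X p x e t > a}"

definition Z_up :: "real \<Rightarrow> real \<Rightarrow> complex \<Rightarrow> real \<Rightarrow> real \<Rightarrow> complex" where
  "Z_up lam p w x a = integral\<^sup>L (aimd_space lam) (\<lambda>e. exp (- w * complex_of_real (tau_up p x a e)))"

end

theory Submission
  imports Defs
begin


definition bb :: "complex \<Rightarrow> real \<Rightarrow> real \<Rightarrow> nat \<Rightarrow> complex" where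
  "bb w lam p n = (\<Prod>i\<in>{1..n}. w + complex_of_real lam - complex_of_real (lam * p ^ i))"

definition cc :: "complex \<Rightarrow> real \<Rightarrow> real \<Rightarrow> nat \<Rightarrow> complex" where
  "cc w lam p n = (if n = 0 then 1 else w * bb w lam p (n - 1) / fact n)"

definition HH :: "complex \<Rightarrow> real \<Rightarrow> real \<Rightarrow> complex \<Rightarrow> complex" where
  "HH w lam p z = (\<Sum>n. cc w lam p n * z ^ n)"

lemma bb_Suc: "bb w lam p (Suc n) = bb w lam p n * (w + complex_of_real lam - complex_of_real (lam * p ^ Suc n))"
  unfolding bb_def by (simp add: prod.nat_ivl_Suc' mult.commute)

lemma bb_bound:
  assumes "0 \<le> lam" "0 \<le> p" "p \<le> 1"
  shows "norm (bb w lam p n) \<le> (cmod w + lam + 1) ^ n"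
proof -
  have "norm (w + complex_of_real lam - complex_of_real (lam * p ^ i)) \<le> cmod w + lam + 1" for i
  proof -
    have "w + complex_of_real lam - complex_of_real (lam * p ^ i) = w + complex_of_real (lam * (1 - p ^ i))"
      by (simp add: algebra_simps)
    moreover have "norm (complex_of_real (lam * (1 - p ^ i))) \<le> lam"
    proof -
      have "0 \<le> p ^ i" "p ^ i \<le> 1" using assms by (simp_all add: power_le_one)
      then have "\<bar>lam * (1 - p ^ i)\<bar> \<le> lam" using assms by (simp add: abs_mult mult_left_le)
      moreover have "norm (complex_of_real (lam * (1 - p ^ i))) = \<bar>lam * (1 - p ^ i)\<bar>" by (rule norm_of_real)
      ultimately show ?thesis by simp
    qed
    ultimately show ?thesis by (metis add_mono norm_triangle_ineq order.trans add_le_cancel_left le_add_same_cancel1 zero_le_one add.assoc)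
  qed
  then have "norm (bb w lam p n) \<le> (\<Prod>i\<in>{1..n}. (cmod w + lam + 1))"
    unfolding bb_def prod_norm[symmetric] by (intro prod_mono) auto
  then show ?thesis by simp
qed

lemma cc_bound:
  assumes "0 \<le> lam" "0 \<le> p" "p \<le> 1"
  shows "norm (cc w lam p n) \<le> (cmod w + lam + 1) ^ n / fact n"
proof (cases n)
  case 0 then show ?thesis by (simp add: cc_def)
next
  case (Suc m)
  let ?R = "cmod w + lam + 1"
  have R: "cmod w \<le> ?R" "0 \<le> ?R" using assms by simp_all
  have "norm (cc w lam p n) = cmod w * norm (bb w lam p m) / fact n"
    using Suc by (simp add: cc_def norm_mult norm_divide del: fact_Suc)
  also have "\<dots> \<le> ?R * ?R ^ m / fact n"
    using R bb_bound[OF assms, of w m] by (intro divide_right_mono mult_mono) auto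
  finally show ?thesis using Suc by simp
qed

lemma cc_summable:
  assumes "0 \<le> lam" "0 \<le> p" "p \<le> 1"
  shows "summable (\<lambda>n. cc w lam p n * z ^ n)"
proof (rule summable_comparison_test)
  let ?R = "cmod w + lam + 1"
  show "\<exists>N. \<forall>n\<ge>N. norm (cc w lam p n * z ^ n) \<le> (?R * cmod z) ^ n / fact n"
  proof (intro exI allI impI)
    fix n
    have "norm (cc w lam p n * z ^ n) = norm (cc w lam p n) * cmod z ^ n" by (simp add: norm_mult norm_power)
    also have "\<dots> \<le> ?R ^ n / fact n * cmod z ^ n"
      by (intro mult_right_mono cc_bound assms) simp
    finally show "norm (cc w lam p n * z ^ n) \<le> (?R * cmod z) ^ n / fact n"
      by (simp add: power_mult_distrib)
  qed
  show "summable (\<lambda>n. (?R * cmod z) ^ n / fact n)"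
    using summable_exp[of "?R * cmod z"] by (simp add: divide_inverse mult.commute)
qed

lemma diffs_cc: "diffs (cc w lam p) n = (w + complex_of_real lam - complex_of_real (lam * p ^ n)) * cc w lam p n"
proof (cases n)
  case 0 then show ?thesis by (simp add: diffs_def cc_def bb_def)
next
  case (Suc m)
  have "diffs (cc w lam p) n = of_nat (Suc n) * (w * bb w lam p n / fact (Suc n))"
    by (simp add: diffs_def cc_def)
  also have "\<dots> = w * bb w lam p n / fact n"
    by (simp add: field_simps del: of_nat_Suc)
  also have "\<dots> = (w + complex_of_real lam - complex_of_real (lam * p ^ n)) * cc w lam p n"
    using Suc by (simp add: cc_def bb_Suc field_simps)
  finally show ?thesis .
qed

lemma HH_deriv:
  assumes "0 \<le> lam" "0 \<le> p" "p \<le> 1"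
  shows "(HH w lam p has_field_derivative
      ((w + complex_of_real lam) * HH w lam p z - complex_of_real lam * HH w lam p (complex_of_real p * z))) (at z)"
proof -
  have d: "(HH w lam p has_field_derivative (\<Sum>n. diffs (cc w lam p) n * z ^ n)) (at z)"
    unfolding HH_def[abs_def] by (rule termdiffs_strong_converges_everywhere) (rule cc_summable[OF assms])
  have s1: "summable (\<lambda>n. (w + complex_of_real lam) * (cc w lam p n * z ^ n))"
    using cc_summable[OF assms] by (rule summable_mult)
  have s2: "summable (\<lambda>n. complex_of_real lam * (cc w lam p n * (complex_of_real p * z) ^ n))"
    using cc_summable[OF assms] by (rule summable_mult)
  have "(\<Sum>n. diffs (cc w lam p) n * z ^ n) =
      (\<Sum>n. (w + complex_of_real lam) * (cc w lam p n * z ^ n) - complex_of_real lam * (cc w lam p n * (complex_of_real p * z) ^ n))"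
    by (intro suminf_cong) (simp add: diffs_cc algebra_simps power_mult_distrib)
  also have "\<dots> = (\<Sum>n. (w + complex_of_real lam) * (cc w lam p n * z ^ n)) - (\<Sum>n. complex_of_real lam * (cc w lam p n * (complex_of_real p * z) ^ n))"
    by (rule suminf_diff[OF s1 s2, symmetric])
  also have "\<dots> = (w + complex_of_real lam) * HH w lam p z - complex_of_real lam * HH w lam p (complex_of_real p * z)"
    unfolding HH_def using cc_summable[OF assms] by (simp add: suminf_mult)
  finally show ?thesis using d by simp
qed

lemma HH_formula:
  assumes "0 \<le> lam" "0 \<le> p" "p \<le> 1" "w \<noteq> 0"
  shows "HH w lam p (complex_of_real y) = 1 + w * (\<Sum>n. complex_of_real (y ^ Suc n / fact (Suc n))
                    * (\<Prod>i\<in>{1..n}. w + complex_of_real lam - complex_of_real (lam * p ^ i)))"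
proof -
  let ?f = "\<lambda>n. cc w lam p n * complex_of_real y ^ n"
  let ?g = "\<lambda>n. complex_of_real (y ^ Suc n / fact (Suc n)) * bb w lam p n"
  have sf: "summable ?f" by (rule cc_summable[OF assms(1-3)])
  have fg: "?f (Suc n) = w * ?g n" for n
    by (simp add: cc_def field_simps)
  have "summable (\<lambda>n. ?f (Suc n))" by (rule iffD2[OF summable_Suc_iff sf])
  then have "summable (\<lambda>n. w * ?g n)" unfolding fg .
  then have sg: "summable ?g" using assms(4) summable_cmult_iff[of w ?g] by blast
  have "HH w lam p (complex_of_real y) = ?f 0 + (\<Sum>n. ?f (Suc n))"
    unfolding HH_def using suminf_split_head[OF sf] by simp
  also have "\<dots> = 1 + w * (\<Sum>n. ?g n)" unfolding fg suminf_mult[OF sg] by (simp add: cc_def)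
  finally show ?thesis by (simp add: bb_def)
qed



abbreviation Mexp :: "real \<Rightarrow> real measure" where
  "Mexp lam \<equiv> density lborel (exponential_density lam)"

lemma sets_Mexp[simp, measurable_cong]: "sets (Mexp lam) = sets borel"
  by simp

lemma space_Mexp[simp]: "space (Mexp lam) = UNIV"
  by simp

lemma Mexp_prob: "0 < lam \<Longrightarrow> prob_space (Mexp lam)"
  by (rule prob_space_exponential_density)

lemma Mexp_dist: "distributed (Mexp lam) lborel (\<lambda>x. x) (exponential_density lam)"
  unfolding distributed_def by (simp add: distr_id2)

lemma Mexp_gt:
  assumes "0 < lam" "0 \<le> b"
  shows "measure (Mexp lam) {s. b < s} = exp (- b * lam)"
proof -
  interpret prob_space "Mexp lam" by (rule Mexp_prob[OF assms(1)])
  show ?thesis using exponential_distributedD_gt[OF Mexp_dist assms(2,1)] by simp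
qed

lemma Mexp_le:
  assumes "0 < lam" "0 \<le> b"
  shows "measure (Mexp lam) {s. s \<le> b} = 1 - exp (- b * lam)"
proof -
  interpret prob_space "Mexp lam" by (rule Mexp_prob[OF assms(1)])
  show ?thesis using exponential_distributedD_le[OF Mexp_dist assms(2,1)] by simp
qed

lemma Mexp_AE_nonneg: "AE s in Mexp lam. 0 \<le> s"
  by (subst AE_density) (auto simp: exponential_density_def)

lemma HH_cont:
  assumes "0 \<le> lam" "0 \<le> p" "p \<le> 1"
  shows "continuous_on A (HH w lam p)"
  by (rule continuous_at_imp_continuous_on) (use DERIV_isCont[OF HH_deriv[OF assms]] in blast)

lemma HH_deriv_chain[derivative_intros]:
  assumes "0 \<le> lam" "0 \<le> p" "p \<le> 1"
    and "(f has_field_derivative f') (at z within S)"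
  shows "((\<lambda>z. HH w lam p (f z)) has_field_derivative
     (((w + complex_of_real lam) * HH w lam p (f z) - complex_of_real lam * HH w lam p (complex_of_real p * f z)) * f'))
     (at z within S)"
  by (rule DERIV_chain2[OF HH_deriv[OF assms(1-3)] assms(4)])

lemma exp_split: "exp (- (complex_of_real lam + w) * complex_of_real s) = complex_of_real (exp (- s * lam)) * exp (- w * complex_of_real s)"
  by (simp add: mult_exp_exp flip: exp_of_real) (simp add: algebra_simps)

definition psi where
  "psi w lam p x a s = (if a - x < s then HH w lam p (complex_of_real a) * exp (- w * complex_of_real (a - x))
      else if 0 \<le> s then exp (- w * complex_of_real s) * HH w lam p (complex_of_real (p * (x + s))) else 0)"

lemma hh_eq:
  assumes lam: "0 < lam" and p: "0 \<le> p" "p \<le> 1" and x: "0 \<le> x" "x \<le> a"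
  shows "integrable (Mexp lam) (psi w lam p x a) \<and> HH w lam p (complex_of_real x) = (\<integral>s. psi w lam p x a s \<partial>Mexp lam)"
proof -
  interpret prob_space "Mexp lam" by (rule Mexp_prob[OF lam])
  define b where "b = a - x"
  have b: "0 \<le> b" using x by (simp add: b_def)
  let ?H = "HH w lam p"
  define c where "c = ?H (complex_of_real a) * exp (- w * complex_of_real b)"
  define g where "g s = exp (- w * complex_of_real s) * ?H (complex_of_real (p * (x + s)))" for s
  have lp: "0 \<le> lam" "0 \<le> p" "p \<le> 1" using lam p by auto
  have gc: "continuous_on A g" for A
    unfolding g_def by (intro continuous_intros continuous_on_compose2[OF HH_cont[OF lp, of UNIV]]) auto
  have "bounded (g ` {0..b})" by (intro compact_imp_bounded compact_continuous_image gc) auto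
  then obtain B where B: "\<And>s. s \<in> {0..b} \<Longrightarrow> norm (g s) \<le> B" unfolding bounded_iff by blast
  have gm: "g \<in> borel_measurable borel" by (rule borel_measurable_continuous_onI[OF gc])
  let ?p1 = "\<lambda>s. indicator {b<..} s *\<^sub>R c"
  let ?p2 = "\<lambda>s. indicator {0..b} s *\<^sub>R g s"
  have m1: "?p1 \<in> borel_measurable (Mexp lam)" by measurable
  have m2b: "?p2 \<in> borel_measurable borel" using gm by measurable
  have m2: "?p2 \<in> borel_measurable (Mexp lam)" using gm by measurable
  have i1: "integrable (Mexp lam) ?p1"
    by (rule integrable_const_bound[where B="norm c"]) (auto simp: indicator_def m1)
  have nb: "norm (?p2 s) \<le> max 0 B" for s
  proof (cases "s \<in> {0..b}")
    case True then show ?thesis using B[OF True] by simp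
  next
    case False then show ?thesis by simp
  qed
  have i2: "integrable (Mexp lam) ?p2"
    by (rule integrable_const_bound[OF AE_I2[OF nb] m2])
  have eq: "(if a - x < s then ?H (complex_of_real a) * exp (- w * complex_of_real (a - x))
      else if 0 \<le> s then exp (- w * complex_of_real s) * ?H (complex_of_real (p * (x + s))) else 0) = ?p1 s + ?p2 s" for s
    by (auto simp: indicator_def b_def c_def g_def)
  have I1: "(\<integral>s. ?p1 s \<partial>Mexp lam) = complex_of_real (exp (- b * lam)) * c"
  proof -
    have "(\<integral>s. ?p1 s \<partial>Mexp lam) = measure (Mexp lam) {b<..} *\<^sub>R c"
      by (subst integral_scaleR_left) (auto intro!: integrable_real_indicator simp: less_top[symmetric] emeasure_finite)
    moreover have "measure (Mexp lam) {b<..} = exp (- b * lam)"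
      using Mexp_gt[OF lam b] by (simp add: greaterThan_def)
    ultimately show ?thesis by (simp add: scaleR_conv_of_real)
  qed
  define K where "K z = - (exp (- (complex_of_real lam + w) * z) * ?H (complex_of_real x + z))" for z
  define f where "f s = complex_of_real lam * exp (- (complex_of_real lam + w) * complex_of_real s) *
      ?H (complex_of_real p * (complex_of_real x + complex_of_real s))" for s
  have Kd: "(K has_field_derivative f s) (at (complex_of_real s))" for s
    unfolding K_def f_def
    by (rule derivative_eq_intros refl lp | simp)+ (simp add: algebra_simps)
  have fc: "continuous_on {0..b} f"
    unfolding f_def by (intro continuous_intros continuous_on_compose2[OF HH_cont[OF lp, of UNIV]]) auto
  have I2: "(\<integral>s. ?p2 s \<partial>Mexp lam) = K (complex_of_real b) - K 0"
  proof -
    have "(\<integral>s. ?p2 s \<partial>Mexp lam) = (\<integral>s. exponential_density lam s *\<^sub>R ?p2 s \<partial>lborel)"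
      by (rule integral_density) (auto simp: m2b exponential_density_nonneg[OF lam])
    also have "\<dots> = (\<integral>s. indicator {0..b} s *\<^sub>R f s \<partial>lborel)"
    proof (rule Bochner_Integration.integral_cong[OF refl])
      fix s :: real
      show "exponential_density lam s *\<^sub>R ?p2 s = indicator {0..b} s *\<^sub>R f s"
      proof (cases "s \<in> {0..b}")
        case True
        have ed: "exponential_density lam s = lam * exp (- s * lam)" using True by (simp add: exponential_density_def)
        have arg: "complex_of_real (p * (x + s)) = complex_of_real p * (complex_of_real x + complex_of_real s)" by simp
        show ?thesis unfolding f_def exp_split g_def arg ed using True by (simp add: scaleR_conv_of_real mult_ac)
      qed simp
    qed
    also have "\<dots> = (\<lambda>s. K (complex_of_real s)) b - (\<lambda>s. K (complex_of_real s)) 0"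
      by (rule integral_FTC_atLeastAtMost[OF b _ fc]) (rule has_vector_derivative_real_field[OF Kd])
    finally show ?thesis by simp
  qed
  have "(\<integral>s. (if a - x < s then ?H (complex_of_real a) * exp (- w * complex_of_real (a - x))
      else if 0 \<le> s then exp (- w * complex_of_real s) * ?H (complex_of_real (p * (x + s))) else 0) \<partial>Mexp lam)
    = (\<integral>s. ?p1 s + ?p2 s \<partial>Mexp lam)" by (simp only: eq)
  also have "\<dots> = (\<integral>s. ?p1 s \<partial>Mexp lam) + (\<integral>s. ?p2 s \<partial>Mexp lam)"
    by (rule Bochner_Integration.integral_add[OF i1 i2])
  also have "\<dots> = complex_of_real (exp (- b * lam)) * c + (K (complex_of_real b) - K 0)"
    by (simp only: I1 I2)
  also have "\<dots> = ?H (complex_of_real x)"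
  proof -
    have xb: "complex_of_real x + complex_of_real b = complex_of_real a" by (simp add: b_def flip: of_real_add)
    show ?thesis unfolding K_def c_def exp_split xb by (simp add: algebra_simps)
  qed
  finally have "(\<integral>s. (if a - x < s then ?H (complex_of_real a) * exp (- w * complex_of_real (a - x))
      else if 0 \<le> s then exp (- w * complex_of_real s) * ?H (complex_of_real (p * (x + s))) else 0) \<partial>Mexp lam) = ?H (complex_of_real x)" .
  moreover have "integrable (Mexp lam) (\<lambda>s. (if a - x < s then ?H (complex_of_real a) * exp (- w * complex_of_real (a - x))
      else if 0 \<le> s then exp (- w * complex_of_real s) * ?H (complex_of_real (p * (x + s))) else 0))"
    unfolding eq by (rule Bochner_Integration.integrable_add[OF i1 i2])
  ultimately show ?thesis unfolding psi_def[abs_def] by simp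
qed



lemma X_right:
  "\<exists>d>0. \<forall>s. t \<le> s \<and> s < t + d \<longrightarrow> aimd_X p x e s = aimd_X p x e t + (s - t)"
proof (cases "\<exists>k. t < aimd_T e (Suc k)")
  case True
  define k0 where "k0 = (LEAST k. t < aimd_T e (Suc k))"
  have k0: "t < aimd_T e (Suc k0)" using True unfolding k0_def by (meson LeastI_ex)
  have lt: "\<And>y. y < k0 \<Longrightarrow> \<not> t < aimd_T e (Suc y)" unfolding k0_def by (rule not_less_Least)
  show ?thesis
  proof (intro exI[of _ "aimd_T e (Suc k0) - t"] conjI allI impI)
    show "0 < aimd_T e (Suc k0) - t" using k0 by simp
    fix s assume s: "t \<le> s \<and> s < t + (aimd_T e (Suc k0) - t)"
    have "(LEAST k. s < aimd_T e (Suc k)) = k0"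
    proof (rule Least_equality)
      show "s < aimd_T e (Suc k0)" using s by simp
      fix y assume "s < aimd_T e (Suc y)"
      then have "\<not> y < k0" using lt[of y] s by auto
      then show "k0 \<le> y" by simp
    qed
    then show "aimd_X p x e s = aimd_X p x e t + (s - t)"
      unfolding aimd_X_def Let_def k0_def[symmetric] by simp
  qed
next
  case False
  show ?thesis
  proof (intro exI[of _ 1] conjI allI impI)
    fix s assume s: "t \<le> s \<and> s < t + 1"
    have "(\<lambda>k. s < aimd_T e (Suc k)) = (\<lambda>k. t < aimd_T e (Suc k))"
    proof
      fix k
      have "\<not> t < aimd_T e (Suc k)" using False by blast
      then show "(s < aimd_T e (Suc k)) = (t < aimd_T e (Suc k))" using s by auto
    qed
    then show "aimd_X p x e s = aimd_X p x e t + (s - t)"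
      unfolding aimd_X_def Let_def by simp
  qed simp
qed

definition Aset where "Aset p x a e = {t. 0 \<le> t \<and> a < aimd_X p x e t}"

lemma Aset_rat:
  assumes "t \<in> Aset p x a e" "0 < \<epsilon>"
  shows "\<exists>q\<in>\<rat>. q \<in> Aset p x a e \<and> q < t + \<epsilon>"
proof -
  obtain d where d: "d > 0" "\<And>s. t \<le> s \<and> s < t + d \<Longrightarrow> aimd_X p x e s = aimd_X p x e t + (s - t)"
    using X_right by blast
  have mpos: "t < t + min d \<epsilon>" using d(1) assms(2) by simp
  obtain q where q: "q \<in> \<rat>" "t < q" "q < t + min d \<epsilon>"
    using Rats_dense_in_real[OF mpos] by blast
  have m1: "min d \<epsilon> \<le> d" "min d \<epsilon> \<le> \<epsilon>" by simp_all
  have qd: "t \<le> q \<and> q < t + d" using q(2,3) m1 by linarith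
  have X: "aimd_X p x e q = aimd_X p x e t + (q - t)" by (rule d(2)[OF qd])
  have t0: "0 \<le> t" "a < aimd_X p x e t" using assms(1) unfolding Aset_def by simp_all
  have "0 \<le> q" "a < aimd_X p x e q" using t0 q(2) X by linarith+
  then have "q \<in> Aset p x a e" unfolding Aset_def by simp
  moreover have "q < t + \<epsilon>" using q(3) m1 by linarith
  ultimately show ?thesis using q(1) by blast
qed

lemma Inf_Aset_rat:
  assumes "A \<noteq> {}"  "A = Aset p x a e"
  shows "Inf A = Inf (A \<inter> \<rat>)"
proof -
  have bA: "bdd_below A" using assms unfolding Aset_def bdd_below_def by auto
  have ne: "A \<inter> \<rat> \<noteq> {}" using Aset_rat[of _ p x a e 1] assms by fastforce
  have "Inf A \<le> Inf (A \<inter> \<rat>)" using ne bA by (intro cInf_superset_mono) auto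
  moreover have eps: "Inf (A \<inter> \<rat>) \<le> Inf A + \<epsilon>" if "\<epsilon> > 0" for \<epsilon>
  proof -
    have "Inf A < Inf A + \<epsilon>/2" using that by simp
    then obtain t where t: "t \<in> A" "t < Inf A + \<epsilon>/2"
      using cInf_lessD[OF assms(1)] by blast
    have e2: "0 < \<epsilon>/2" using that by simp
    obtain q where q: "q \<in> \<rat>" "q \<in> A" "q < t + \<epsilon>/2"
      using Aset_rat[of t p x a e "\<epsilon>/2", OF _ e2] t assms by auto
    have "Inf (A \<inter> \<rat>) \<le> q" using q bA by (intro cInf_lower) (auto intro: bdd_below_mono)
    then show ?thesis using q t by simp
  qed
  have "Inf (A \<inter> \<rat>) \<le> Inf A" by (rule field_le_epsilon[OF eps])
  ultimately show ?thesis by (rule antisym)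
qed

lemma tau_rat:
  "tau_up p x a e = (if Aset p x a e \<inter> \<rat> \<noteq> {} then
      real_of_ereal (INF q\<in>\<rat> \<inter> {0..}. (if a < aimd_X p x e q then ereal q else \<infinity>))
    else Inf {})"
proof -
  have tdef: "tau_up p x a e = Inf (Aset p x a e)" unfolding tau_up_def Aset_def by simp
  show ?thesis
  proof (cases "Aset p x a e \<inter> \<rat> \<noteq> {}")
    case True
    let ?B = "Aset p x a e \<inter> \<rat>"
    have bB: "bdd_below ?B" unfolding Aset_def bdd_below_def by auto
    have "(INF q\<in>\<rat> \<inter> {0..}. (if a < aimd_X p x e q then ereal q else \<infinity>)) = (INF q\<in>?B. ereal q)"
    proof (rule antisym)
      show "(INF q\<in>\<rat> \<inter> {0..}. (if a < aimd_X p x e q then ereal q else \<infinity>)) \<le> (INF q\<in>?B. ereal q)"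
        by (rule INF_greatest, rule INF_lower2[where i="_"]) (auto simp: Aset_def)
      show "(INF q\<in>?B. ereal q) \<le> (INF q\<in>\<rat> \<inter> {0..}. (if a < aimd_X p x e q then ereal q else \<infinity>))"
        by (rule INF_greatest) (auto intro: INF_lower simp: Aset_def)
    qed
    also have "\<dots> = ereal (Inf ?B)" using True bB by (simp add: ereal_Inf')
    finally show ?thesis using True tdef Inf_Aset_rat[of "Aset p x a e" p x a e] by auto
  next
    case False
    then have "Aset p x a e = {}" using Aset_rat[of _ p x a e 1] by fastforce
    then show ?thesis using False tdef by simp
  qed
qed



lemma comp_meas[measurable]: "(\<lambda>e. e i) \<in> borel_measurable (aimd_space lam)"
  unfolding aimd_space_def by measurable

lemma T_meas[measurable]: "(\<lambda>e. aimd_T e k) \<in> borel_measurable (aimd_space lam)"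
  unfolding aimd_T_def by measurable

lemma Y_meas[measurable]: "(\<lambda>e. aimd_Y p x e k) \<in> borel_measurable (aimd_space lam)"
  by (induct k) simp_all

lemma X_meas[measurable]: "(\<lambda>e. aimd_X p x e t) \<in> borel_measurable (aimd_space lam)"
proof -
  have g: "(\<lambda>e. LEAST k. t < aimd_T e (Suc k)) \<in> measurable (aimd_space lam) (count_space UNIV)"
    by measurable
  have "(\<lambda>e. (\<lambda>k e. aimd_Y p x e k + (t - aimd_T e k)) (LEAST k. t < aimd_T e (Suc k)) e)
     \<in> borel_measurable (aimd_space lam)"
    by (rule measurable_compose_countable'[OF _ g]) auto
  then show ?thesis unfolding aimd_X_def Let_def by simp
qed

lemma tau_meas[measurable]: "(\<lambda>e. tau_up p x a e) \<in> borel_measurable (aimd_space lam)"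
proof -
  have cQ: "countable (\<rat> \<inter> {0::real..})" using countable_rat by blast
  have eq: "(Aset p x a e \<inter> \<rat> \<noteq> {}) = (\<exists>q\<in>\<rat> \<inter> {0..}. a < aimd_X p x e q)" for e
    unfolding Aset_def by auto
  have 1: "Measurable.pred (aimd_space lam) (\<lambda>e. \<exists>q\<in>\<rat> \<inter> {0..}. a < aimd_X p x e q)"
    using cQ by measurable
  have 2: "(\<lambda>e. INF q\<in>\<rat> \<inter> {0..}. (if a < aimd_X p x e q then ereal q else \<infinity>)) \<in> borel_measurable (aimd_space lam)"
    using cQ by measurable
  have "(\<lambda>e. if (\<exists>q\<in>\<rat> \<inter> {0..}. a < aimd_X p x e q) then
      real_of_ereal (INF q\<in>\<rat> \<inter> {0..}. (if a < aimd_X p x e q then ereal q else \<infinity>))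
    else Inf {}) \<in> borel_measurable (aimd_space lam)"
    using 1 2 by measurable
  then show ?thesis by (subst tau_rat) (simp add: eq)
qed

lemma F_meas[measurable]: "(\<lambda>e. exp (- w * complex_of_real (tau_up p x a e))) \<in> borel_measurable (aimd_space lam)"
  by measurable

definition good where "good a \<omega> \<longleftrightarrow> (\<forall>i. 0 \<le> \<omega> i) \<and> (\<exists>k. a < \<omega> k)"

lemma T_Suc: "aimd_T e (Suc k) = aimd_T e k + e k"
  unfolding aimd_T_def by simp

lemma T_mono: "(\<forall>i. 0 \<le> e i) \<Longrightarrow> j \<le> k \<Longrightarrow> aimd_T e j \<le> aimd_T e k"
  unfolding aimd_T_def by (intro sum_mono2) auto

lemma T_nonneg: "(\<forall>i. 0 \<le> e i) \<Longrightarrow> 0 \<le> aimd_T e k"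
  unfolding aimd_T_def by (intro sum_nonneg) auto

lemma Y_nonneg: "0 \<le> x \<Longrightarrow> 0 \<le> p \<Longrightarrow> (\<forall>i. 0 \<le> e i) \<Longrightarrow> 0 \<le> aimd_Y p x e k"
  by (induct k) auto

lemma witness:
  assumes "good a \<omega>" "0 \<le> x" "0 \<le> p" "0 \<le> a"
  shows "\<exists>t0 k. t0 \<in> Aset p x a \<omega> \<and> t0 < aimd_T \<omega> (Suc k)"
proof -
  obtain k where k: "a < \<omega> k" and nn: "\<forall>i. 0 \<le> \<omega> i" using assms(1) unfolding good_def by auto
  define t0 where "t0 = aimd_T \<omega> k + (\<omega> k + a) / 2"
  have lt: "t0 < aimd_T \<omega> (Suc k)" unfolding t0_def T_Suc using k by simp
  have L: "(LEAST j. t0 < aimd_T \<omega> (Suc j)) = k"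
  proof (rule Least_equality)
    show "t0 < aimd_T \<omega> (Suc k)" by (rule lt)
    fix y assume y: "t0 < aimd_T \<omega> (Suc y)"
    show "k \<le> y"
    proof (rule ccontr)
      assume "\<not> k \<le> y"
      then have "aimd_T \<omega> (Suc y) \<le> aimd_T \<omega> k" using T_mono[OF nn, of "Suc y" k] by simp
      moreover have "aimd_T \<omega> k \<le> t0" unfolding t0_def using k assms by simp
      ultimately show False using y by simp
    qed
  qed
  have "aimd_X p x \<omega> t0 = aimd_Y p x \<omega> k + (\<omega> k + a) / 2"
    unfolding aimd_X_def Let_def L unfolding t0_def by simp
  moreover have "0 \<le> aimd_Y p x \<omega> k" using Y_nonneg assms nn by blast
  moreover have "a < (\<omega> k + a) / 2" using k by (simp add: field_simps)
  ultimately have "a < aimd_X p x \<omega> t0" by linarith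
  moreover have "0 \<le> t0" unfolding t0_def using T_nonneg[OF nn, of k] k assms by simp
  ultimately show ?thesis using lt unfolding Aset_def by blast
qed

lemma Y_shift: "aimd_Y p x (case_nat s \<omega>) (Suc m) = aimd_Y p (p * (x + s)) \<omega> m"
  by (induct m) auto

lemma T_shift: "aimd_T (case_nat s \<omega>) (Suc k) = s + aimd_T \<omega> k"
  by (induct k) (auto simp: aimd_T_def)

lemma X_shift:
  assumes "0 \<le> s" "s \<le> t" "t - s < aimd_T \<omega> (Suc k)"
  shows "aimd_X p x (case_nat s \<omega>) t = aimd_X p (p * (x + s)) \<omega> (t - s)"
proof -
  let ?e = "case_nat s \<omega>"
  have T1: "aimd_T ?e (Suc 0) = s" by (simp add: aimd_T_def)
  have P0: "\<not> t < aimd_T ?e (Suc 0)" unfolding T1 using assms(2) by simp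
  have Pn: "t < aimd_T ?e (Suc (Suc k))" unfolding T_shift using assms(3) by simp
  define m0 where "m0 = (LEAST m. t - s < aimd_T \<omega> (Suc m))"
  have pe: "(\<lambda>m. t < aimd_T ?e (Suc (Suc m))) = (\<lambda>m. t - s < aimd_T \<omega> (Suc m))"
    by (rule ext) (simp only: T_shift, linarith)
  have L: "(LEAST j. t < aimd_T ?e (Suc j)) = Suc (LEAST m. t < aimd_T ?e (Suc (Suc m)))"
    by (rule Least_Suc[OF Pn P0])
  have L2: "(LEAST m. t < aimd_T ?e (Suc (Suc m))) = m0"
    unfolding m0_def by (simp only: pe)
  have "aimd_X p x ?e t = aimd_Y p x ?e (Suc m0) + (t - aimd_T ?e (Suc m0))"
    unfolding aimd_X_def Let_def L L2 ..
  also have "\<dots> = aimd_Y p (p * (x + s)) \<omega> m0 + (t - s - aimd_T \<omega> m0)"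
    unfolding Y_shift T_shift by simp
  also have "\<dots> = aimd_X p (p * (x + s)) \<omega> (t - s)"
    unfolding aimd_X_def Let_def m0_def ..
  finally show ?thesis .
qed

lemma Inf_restrict:
  fixes A :: "real set"
  assumes "t0 \<in> A" "bdd_below A"
  shows "Inf A = Inf (A \<inter> {..t0})"
proof (rule antisym)
  show "Inf A \<le> Inf (A \<inter> {..t0})" using assms by (intro cInf_superset_mono) auto
  have b2: "bdd_below (A \<inter> {..t0})" using assms(2) by (rule bdd_below_mono) auto
  show "Inf (A \<inter> {..t0}) \<le> Inf A"
  proof (rule cInf_greatest)
    show "A \<noteq> {}" using assms by auto
    fix y assume y: "y \<in> A"
    show "Inf (A \<inter> {..t0}) \<le> y"
    proof (cases "y \<le> t0")
      case True then show ?thesis using y b2 by (intro cInf_lower) auto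
    next
      case False
      have "Inf (A \<inter> {..t0}) \<le> t0" using assms b2 by (intro cInf_lower) auto
      then show ?thesis using False by simp
    qed
  qed
qed

lemma Inf_shift:
  fixes C :: "real set"
  assumes "C \<noteq> {}" "bdd_below C"
  shows "Inf ((+) s ` C) = s + Inf C"
proof (rule antisym)
  have b: "bdd_below ((+) s ` C)" using assms(2) unfolding bdd_below_def by (auto intro: add_left_mono)
  show "s + Inf C \<le> Inf ((+) s ` C)"
    using assms by (intro cInf_greatest) (auto intro: cInf_lower)
  have "Inf ((+) s ` C) - s \<le> Inf C"
  proof (rule cInf_greatest)
    show "C \<noteq> {}" by (rule assms)
    fix c assume "c \<in> C"
    then have "Inf ((+) s ` C) \<le> s + c" using b by (intro cInf_lower) auto
    then show "Inf ((+) s ` C) - s \<le> c" by simp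
  qed
  then show "Inf ((+) s ` C) \<le> s + Inf C" by simp
qed

lemma Inf_interval:
  fixes A :: "real set"
  assumes "A \<subseteq> {c..}" "{c<..<d} \<subseteq> A" "c < d"
  shows "Inf A = c"
proof (rule antisym)
  have ne: "A \<noteq> {}" using assms dense[of c d] by auto
  have b: "bdd_below A" using assms(1) unfolding bdd_below_def by auto
  show "c \<le> Inf A" using ne assms(1) by (intro cInf_greatest) auto
  have eps: "Inf A \<le> c + \<epsilon>" if "\<epsilon> > 0" for \<epsilon>
  proof -
    have "c + min \<epsilon> ((d - c)/2) \<in> A" using assms that by (intro subsetD[OF assms(2)]) (auto simp: min_def field_simps)
    then have "Inf A \<le> c + min \<epsilon> ((d - c)/2)" using b by (intro cInf_lower)
    then show ?thesis by simp
  qed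
  show "Inf A \<le> c" by (rule field_le_epsilon[OF eps])
qed

lemma tau_def2: "tau_up p x a e = Inf (Aset p x a e)"
  unfolding tau_up_def Aset_def by simp

lemma X_before:
  assumes "t < s"
  shows "aimd_X p x (case_nat s \<omega>) t = x + t"
proof -
  have T1: "aimd_T (case_nat s \<omega>) (Suc 0) = s" by (simp add: aimd_T_def)
  have "(LEAST j. t < aimd_T (case_nat s \<omega>) (Suc j)) = 0"
    by (rule Least_equality) (simp_all only: T1 assms le0)
  then show ?thesis unfolding aimd_X_def Let_def by (simp add: aimd_T_def)
qed

lemma R1:
  assumes "x \<le> a" "a - x < s"
  shows "tau_up p x a (case_nat s \<omega>) = a - x"
proof -
  let ?e = "case_nat s \<omega>"
  have X0: "aimd_X p x ?e t = x + t" if "t < s" for t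
    using that by (rule X_before)
  have "Inf (Aset p x a ?e) = a - x"
  proof (rule Inf_interval)
    show "Aset p x a ?e \<subseteq> {a - x..}"
    proof
      fix t assume t: "t \<in> Aset p x a ?e"
      show "t \<in> {a - x..}"
      proof (cases "t < s")
        case True then show ?thesis using t X0[OF True] unfolding Aset_def by auto
      next
        case False then show ?thesis using assms by auto
      qed
    qed
    show "{a - x<..<s} \<subseteq> Aset p x a ?e" using X0 assms unfolding Aset_def by auto
  qed (use assms in auto)
  then show ?thesis by (simp add: tau_def2)
qed

lemma R2:
  assumes "0 \<le> x" "0 \<le> s" "x + s \<le> a" "0 \<le> p" "good a \<omega>"
  shows "tau_up p x a (case_nat s \<omega>) = s + tau_up p (p * (x + s)) a \<omega>"
proof -
  let ?e = "case_nat s \<omega>" and ?x = "p * (x + s)"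
  let ?A = "Aset p x a ?e" and ?A' = "Aset p ?x a \<omega>"
  have x': "0 \<le> ?x" using assms by simp
  have a0: "0 \<le> a" using assms by linarith
  obtain t0 k where t0: "t0 \<in> ?A'" "t0 < aimd_T \<omega> (Suc k)"
    using witness[OF assms(5) x' assms(4) a0] by blast
  have X0: "aimd_X p x ?e t = x + t" if "t < s" for t
    using that by (rule X_before)
  have eq: "?A \<inter> {..s + t0} = (+) s ` (?A' \<inter> {..t0})"
  proof (intro equalityI subsetI)
    fix t assume t: "t \<in> ?A \<inter> {..s + t0}"
    have ts: "s \<le> t"
    proof (rule ccontr)
      assume "\<not> s \<le> t"
      then have "t < s" by simp
      then have "aimd_X p x ?e t = x + t" by (rule X0)
      moreover have "a < aimd_X p x ?e t" using t unfolding Aset_def by simp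
      ultimately show False using \<open>t < s\<close> assms(3) by linarith
    qed
    have lt2: "t - s < aimd_T \<omega> (Suc k)" using t t0(2) by simp
    have "aimd_X p x ?e t = aimd_X p ?x \<omega> (t - s)"
      by (rule X_shift[OF assms(2) ts lt2])
    moreover have "a < aimd_X p x ?e t" "t \<le> s + t0" using t unfolding Aset_def by simp_all
    ultimately have "t - s \<in> ?A' \<inter> {..t0}" using ts unfolding Aset_def by simp
    then show "t \<in> (+) s ` (?A' \<inter> {..t0})" by (intro image_eqI[of _ _ "t - s"]) auto
  next
    fix t assume "t \<in> (+) s ` (?A' \<inter> {..t0})"
    then obtain u where u: "u \<in> ?A'" "u \<le> t0" "t = s + u" by auto
    have u0: "0 \<le> u" using u(1) by (simp add: Aset_def)
    have lt: "s + u - s < aimd_T \<omega> (Suc k)" using u(2) t0(2) by simp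
    have "aimd_X p x ?e (s + u) = aimd_X p ?x \<omega> (s + u - s)"
      by (rule X_shift[OF assms(2) _ lt]) (use u0 in simp)
    then have "aimd_X p x ?e (s + u) = aimd_X p ?x \<omega> u" by simp
    moreover have "a < aimd_X p ?x \<omega> u" using u(1) by (simp add: Aset_def)
    ultimately show "t \<in> ?A \<inter> {..s + t0}" using u(2,3) u0 assms(2) by (simp add: Aset_def)
  qed
  have "s + t0 \<in> (+) s ` (?A' \<inter> {..t0})" using t0(1) by simp
  then have "s + t0 \<in> ?A \<inter> {..s + t0}" unfolding eq .
  then have st0: "s + t0 \<in> ?A" by simp
  have bA: "bdd_below ?A" "bdd_below ?A'" unfolding Aset_def bdd_below_def by auto
  have "Inf ?A = Inf ((+) s ` (?A' \<inter> {..t0}))" using Inf_restrict[OF st0 bA(1)] eq by simp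
  also have "\<dots> = s + Inf (?A' \<inter> {..t0})"
  proof -
    have b3: "bdd_below (?A' \<inter> {..t0})" using bA(2) by (rule bdd_below_mono) auto
    have ne: "?A' \<inter> {..t0} \<noteq> {}" using t0(1) by auto
    show ?thesis by (rule Inf_shift[OF ne b3])
  qed
  also have "\<dots> = s + Inf ?A'" using Inf_restrict[OF t0(1) bA(2)] by simp
  finally show ?thesis by (simp add: tau_def2)
qed

lemma tau_nonneg:
  assumes "good a e" "0 \<le> x" "0 \<le> p" "0 \<le> a"
  shows "0 \<le> tau_up p x a e"
proof -
  obtain t0 where "t0 \<in> Aset p x a e" using witness[OF assms] by auto
  then show ?thesis unfolding tau_def2 by (intro cInf_greatest) (auto simp: Aset_def)
qed



lemma S_prob: "0 < lam \<Longrightarrow> prob_space (aimd_space lam)"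
  unfolding aimd_space_def by (rule prob_space_PiM) (rule Mexp_prob)

lemma S_seq: "0 < lam \<Longrightarrow> sequence_space (Mexp lam)"
  unfolding sequence_space_def product_prob_space_def product_prob_space_axioms_def product_sigma_finite_def
  using Mexp_prob by (auto intro: prob_space_imp_sigma_finite)

lemma S_pair: "0 < lam \<Longrightarrow> pair_prob_space (Mexp lam) (aimd_space lam)"
  unfolding pair_prob_space_def pair_sigma_finite_def
  using Mexp_prob S_prob by (auto intro: prob_space_imp_sigma_finite)

lemma AE_good:
  assumes lam: "0 < lam" and a: "0 \<le> a"
  shows "AE \<omega> in aimd_space lam. good a \<omega>"
proof -
  interpret SS: sequence_space "Mexp lam" by (rule S_seq[OF lam])
  have S: "aimd_space lam = SS.S" unfolding aimd_space_def ..
  have A1: "AE \<omega> in aimd_space lam. \<forall>i. 0 \<le> \<omega> i"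
    unfolding AE_all_countable
  proof
    fix i :: nat
    show "AE \<omega> in aimd_space lam. 0 \<le> \<omega> i"
      unfolding aimd_space_def
      by (rule AE_PiM_component[OF Mexp_prob[OF lam]]) (auto simp: Mexp_AE_nonneg)
  qed
  let ?E = "\<lambda>i::nat. {..a}"
  define q where "q = 1 - exp (- a * lam)"
  have mq: "measure (Mexp lam) {..a} = q" unfolding q_def using Mexp_le[OF lam a] by (simp add: atMost_def)
  have q: "0 \<le> q" "q < 1" unfolding q_def using lam a by auto
  have lim1: "(\<lambda>n. \<Prod>i\<le>n. measure (Mexp lam) (?E i)) \<longlonglongrightarrow> measure SS.S (Pi UNIV ?E)"
    by (rule SS.measure_PiM_countable) simp
  have "(\<lambda>n. \<Prod>i\<le>n. measure (Mexp lam) (?E i)) = (\<lambda>n. q * q ^ n)" by (simp add: mq)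
  moreover have "(\<lambda>n. q * q ^ n) \<longlonglongrightarrow> q * 0"
    by (intro tendsto_mult tendsto_const LIMSEQ_power_zero) (use q in auto)
  ultimately have "measure SS.S (Pi UNIV ?E) = 0" using lim1 LIMSEQ_unique by fastforce
  moreover have sE: "Pi UNIV ?E \<in> sets SS.S" by (rule SS.infprod_in_sets) simp
  ultimately have "Pi UNIV ?E \<in> null_sets SS.S"
    by (simp add: SS.emeasure_eq_measure null_sets_def)
  then have A2: "AE \<omega> in aimd_space lam. \<omega> \<notin> Pi UNIV ?E" unfolding S by (rule AE_not_in)
  show ?thesis using A1 A2 by eventually_elim (auto simp: good_def not_le)
qed

definition FF where "FF p x a w e = exp (- w * complex_of_real (tau_up p x a e))"

lemma FF_meas[measurable]: "FF p x a w \<in> borel_measurable (aimd_space lam)"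
  unfolding FF_def by measurable

lemma FF_bound:
  assumes "0 \<le> Re w"
  shows "norm (FF p x a w e) \<le> max 1 (norm (exp (- w * complex_of_real (Inf {}))))"
proof (cases "Aset p x a e = {}")
  case True then show ?thesis by (simp add: FF_def tau_def2)
next
  case False
  then have "0 \<le> tau_up p x a e" unfolding tau_def2 by (intro cInf_greatest) (auto simp: Aset_def)
  then have "norm (FF p x a w e) \<le> 1" unfolding FF_def using assms by (simp add: mult_nonneg_nonneg)
  then show ?thesis by simp
qed

lemma FF_bound1:
  assumes "0 \<le> Re w" "good a e" "0 \<le> x" "0 \<le> p" "0 \<le> a"
  shows "norm (FF p x a w e) \<le> 1"
proof -
  have "0 \<le> tau_up p x a e" by (rule tau_nonneg[OF assms(2-5)])
  then show ?thesis unfolding FF_def using assms by (simp add: mult_nonneg_nonneg)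
qed

lemma FF_int:
  assumes "0 < lam" "0 \<le> Re w"
  shows "integrable (aimd_space lam) (FF p x a w)"
proof -
  interpret prob_space "aimd_space lam" by (rule S_prob[OF assms(1)])
  show ?thesis by (rule integrable_const_bound[OF AE_I2[OF FF_bound[OF assms(2)]]]) simp
qed

lemma Z_FF: "Z_up lam p w x a = (\<integral>e. FF p x a w e \<partial>aimd_space lam)"
  unfolding Z_up_def FF_def ..

lemma Z_bound:
  assumes "0 < lam" "0 \<le> Re w" "0 \<le> x" "0 \<le> p" "0 \<le> a"
  shows "norm (Z_up lam p w x a) \<le> 1"
proof -
  interpret prob_space "aimd_space lam" by (rule S_prob[OF assms(1)])
  have "norm (Z_up lam p w x a) \<le> (\<integral>e. norm (FF p x a w e) \<partial>aimd_space lam)"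
    unfolding Z_FF by (rule integral_norm_bound)
  also have "\<dots> \<le> (\<integral>e. 1 \<partial>aimd_space lam)"
  proof (rule integral_mono_AE)
    show "integrable (aimd_space lam) (\<lambda>e. norm (FF p x a w e))"
      using FF_int[OF assms(1,2)] by (rule integrable_norm)
    show "AE e in aimd_space lam. norm (FF p x a w e) \<le> 1"
      using AE_good[OF assms(1,5)] by eventually_elim (rule FF_bound1[OF assms(2) _ assms(3-5)])
  qed simp
  finally show ?thesis using prob_space.prob_space[OF S_prob[OF assms(1)]] by simp
qed

lemma Z_recursion:
  assumes lam: "0 < lam" and w: "0 \<le> Re w"
  shows "Z_up lam p w x a = (\<integral>s. (\<integral>\<omega>. FF p x a w (case_nat s \<omega>) \<partial>aimd_space lam) \<partial>Mexp lam)"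
proof -
  interpret SS: sequence_space "Mexp lam" by (rule S_seq[OF lam])
  interpret PP: pair_prob_space "Mexp lam" "aimd_space lam" by (rule S_pair[OF lam])
  have S: "aimd_space lam = SS.S" unfolding aimd_space_def ..
  have phi: "(\<lambda>(s, \<omega>). case_nat s \<omega>) \<in> measurable (Mexp lam \<Otimes>\<^sub>M aimd_space lam) (aimd_space lam)"
    unfolding S by measurable
  have "Z_up lam p w x a = (\<integral>e. FF p x a w e \<partial>distr (Mexp lam \<Otimes>\<^sub>M aimd_space lam) (aimd_space lam) (\<lambda>(s, \<omega>). case_nat s \<omega>))"
    unfolding Z_FF S SS.PiM_iter ..
  also have "\<dots> = (\<integral>z. FF p x a w ((\<lambda>(s, \<omega>). case_nat s \<omega>) z) \<partial>(Mexp lam \<Otimes>\<^sub>M aimd_space lam))"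
    by (rule integral_distr[OF phi]) simp
  also have "\<dots> = (\<integral>s. (\<integral>\<omega>. FF p x a w ((\<lambda>(s, \<omega>). case_nat s \<omega>) (s, \<omega>)) \<partial>aimd_space lam) \<partial>Mexp lam)"
  proof (rule PP.integral_fst'[symmetric])
    have m: "(\<lambda>z. FF p x a w ((\<lambda>(s, \<omega>). case_nat s \<omega>) z)) \<in> borel_measurable (Mexp lam \<Otimes>\<^sub>M aimd_space lam)"
      using measurable_comp[OF phi FF_meas] by (simp add: comp_def)
    show "integrable (Mexp lam \<Otimes>\<^sub>M aimd_space lam) (\<lambda>z. FF p x a w ((\<lambda>(s, \<omega>). case_nat s \<omega>) z))"
      by (rule PP.integrable_const_bound[OF AE_I2[OF FF_bound[OF w]] m])
  qed
  finally show ?thesis by simp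
qed

lemma inner_integral:
  assumes lam: "0 < lam" and p: "0 \<le> p" and x: "0 \<le> x" "x \<le> a" and s: "0 \<le> s"
  shows "(\<integral>\<omega>. FF p x a w (case_nat s \<omega>) \<partial>aimd_space lam) =
    (if a - x < s then exp (- w * complex_of_real (a - x))
     else exp (- w * complex_of_real s) * Z_up lam p w (p * (x + s)) a)"
proof -
  interpret prob_space "aimd_space lam" by (rule S_prob[OF lam])
  show ?thesis
  proof (cases "a - x < s")
    case True
    have "FF p x a w (case_nat s \<omega>) = exp (- w * complex_of_real (a - x))" for \<omega>
      unfolding FF_def R1[OF x(2) True] ..
    then show ?thesis using True prob_space.prob_space[OF S_prob[OF lam]] by simp
  next
    case False
    have a: "0 \<le> a" using x by simp
    have mm: "(\<lambda>\<omega>. FF p x a w (case_nat s \<omega>)) \<in> borel_measurable (aimd_space lam)"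
      unfolding aimd_space_def using FF_meas[of p x a w lam] unfolding aimd_space_def by measurable
    have "(\<integral>\<omega>. FF p x a w (case_nat s \<omega>) \<partial>aimd_space lam) =
        (\<integral>\<omega>. exp (- w * complex_of_real s) * FF p (p * (x + s)) a w \<omega> \<partial>aimd_space lam)"
    proof (rule integral_cong_AE[OF mm])
      show "(\<lambda>\<omega>. exp (- w * complex_of_real s) * FF p (p * (x + s)) a w \<omega>) \<in> borel_measurable (aimd_space lam)"
        by measurable
      show "AE \<omega> in aimd_space lam. FF p x a w (case_nat s \<omega>) = exp (- w * complex_of_real s) * FF p (p * (x + s)) a w \<omega>"
        using AE_good[OF lam a]
      proof eventually_elim
        case (elim \<omega>)
        have "tau_up p x a (case_nat s \<omega>) = s + tau_up p (p * (x + s)) a \<omega>"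
          by (rule R2[OF x(1) s _ p elim]) (use False in simp)
        then show ?case unfolding FF_def by (simp add: mult_exp_exp algebra_simps)
      qed
    qed
    also have "\<dots> = exp (- w * complex_of_real s) * Z_up lam p w (p * (x + s)) a"
      unfolding Z_FF by simp
    finally show ?thesis using False by simp
  qed
qed



lemma prob_norm_integral_le:
  fixes f :: "_ \<Rightarrow> complex"
  assumes "prob_space M" "integrable M f" "AE x in M. norm (f x) \<le> B"
  shows "norm (integral\<^sup>L M f) \<le> B"
proof -
  interpret prob_space M by fact
  have "norm (integral\<^sup>L M f) \<le> (\<integral>x. norm (f x) \<partial>M)" by (rule integral_norm_bound)
  also have "\<dots> \<le> (\<integral>x. B \<partial>M)"
    by (rule integral_mono_AE[OF integrable_norm[OF assms(2)] _ assms(3)]) simp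
  finally show ?thesis using prob_space by simp
qed

locale aimd_ctx =
  fixes lam p :: real and w :: complex and a :: real
  assumes lam: "0 < lam" and p: "0 < p" "p < 1" and a: "0 < a" and w: "0 < Re w"
begin

abbreviation "G y \<equiv> Z_up lam p w y a"
abbreviation "h y \<equiv> HH w lam p (complex_of_real y)"
definition "D y = G y * h a - h y"
abbreviation "I x s \<equiv> (\<integral>\<omega>. FF p x a w (case_nat s \<omega>) \<partial>aimd_space lam)"
definition "q = 1 - exp (- a * lam)"

lemma lp: "0 \<le> lam" "0 \<le> p" "p \<le> 1" using lam p by auto

lemma I_meas: "(\<lambda>s. I x s) \<in> borel_measurable (Mexp lam)"
proof -
  interpret SS: sequence_space "Mexp lam" by (rule S_seq[OF lam])
  have S: "aimd_space lam = SS.S" unfolding aimd_space_def ..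
  have phi: "(\<lambda>(s, \<omega>). case_nat s \<omega>) \<in> measurable (Mexp lam \<Otimes>\<^sub>M aimd_space lam) (aimd_space lam)"
    unfolding S by measurable
  have m: "(\<lambda>z. FF p x a w ((\<lambda>(s, \<omega>). case_nat s \<omega>) z)) \<in> borel_measurable (Mexp lam \<Otimes>\<^sub>M aimd_space lam)"
    using measurable_comp[OF phi FF_meas] by (simp add: comp_def)
  have "(\<lambda>s. \<integral>\<omega>. (\<lambda>s \<omega>. FF p x a w (case_nat s \<omega>)) s \<omega> \<partial>aimd_space lam) \<in> borel_measurable (Mexp lam)"
    by (rule sigma_finite_measure.borel_measurable_lebesgue_integral[OF prob_space_imp_sigma_finite[OF S_prob[OF lam]]])
       (use m in \<open>simp add: split_beta'\<close>)
  then show ?thesis by simp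
qed

lemma I_bound: "norm (I x s) \<le> max 1 (norm (exp (- w * complex_of_real (Inf {}))))"
proof -
  have mm: "(\<lambda>\<omega>. FF p x a w (case_nat s \<omega>)) \<in> borel_measurable (aimd_space lam)"
    unfolding aimd_space_def using FF_meas[of p x a w lam] unfolding aimd_space_def by measurable
  have "integrable (aimd_space lam) (\<lambda>\<omega>. FF p x a w (case_nat s \<omega>))"
    using S_prob[OF lam] mm
    by (intro finite_measure.integrable_const_bound[OF prob_space.axioms(1)[OF S_prob[OF lam]] AE_I2[OF FF_bound]]) (use w in auto)
  then show ?thesis
    by (rule prob_norm_integral_le[OF S_prob[OF lam] _ AE_I2[OF FF_bound]]) (use w in auto)
qed

lemma I_int: "integrable (Mexp lam) (\<lambda>s. I x s)"
proof -
  interpret prob_space "Mexp lam" by (rule Mexp_prob[OF lam])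
  show ?thesis by (rule integrable_const_bound[OF AE_I2[OF I_bound] I_meas])
qed

lemma D_rep:
  assumes x: "0 \<le> x" "x \<le> a"
  shows "D x = (\<integral>s. I x s * h a - psi w lam p x a s \<partial>Mexp lam)"
proof -
  have he: "integrable (Mexp lam) (psi w lam p x a)" "h x = (\<integral>s. psi w lam p x a s \<partial>Mexp lam)"
    using hh_eq[OF lam lp(2,3) x, of w] by auto
  have G: "G x = (\<integral>s. I x s \<partial>Mexp lam)" using Z_recursion[OF lam] w by simp
  have "(\<integral>s. I x s * h a - psi w lam p x a s \<partial>Mexp lam) = (\<integral>s. I x s * h a \<partial>Mexp lam) - (\<integral>s. psi w lam p x a s \<partial>Mexp lam)"
    by (rule Bochner_Integration.integral_diff[OF integrable_mult_left[OF I_int] he(1)])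
  also have "\<dots> = G x * h a - h x" unfolding G he(2) by simp
  finally show ?thesis unfolding D_def by simp
qed

lemma q: "0 \<le> q" "q < 1" unfolding q_def using lam a by auto

lemma D_step:
  assumes B: "\<And>y. 0 \<le> y \<Longrightarrow> y < a \<Longrightarrow> norm (D y) \<le> Bd" and x: "0 \<le> x" "x < a"
  shows "norm (D x) \<le> Bd * q"
proof -
  interpret prob_space "Mexp lam" by (rule Mexp_prob[OF lam])
  have xa: "x \<le> a" using x by simp
  have Bd: "0 \<le> Bd" using B[of 0] a by (meson norm_ge_zero order_trans less_imp_le order_refl)
  have he: "integrable (Mexp lam) (psi w lam p x a)"
    using hh_eq[OF lam lp(2,3) x(1)] x by auto
  have di: "integrable (Mexp lam) (\<lambda>s. I x s * h a - psi w lam p x a s)"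
    by (rule Bochner_Integration.integrable_diff[OF integrable_mult_left[OF I_int] he])
  have ii: "integrable (Mexp lam) (\<lambda>s. Bd * indicator {..a} s)"
    by (intro integrable_mult_right integrable_real_indicator) (auto simp: less_top[symmetric] emeasure_finite)
  have pt: "norm (I x s * h a - psi w lam p x a s) \<le> Bd * indicator {..a} s" if s: "0 \<le> s" for s
  proof (cases "a - x < s")
    case True
    then have "I x s * h a - psi w lam p x a s = 0"
      using inner_integral[OF lam lp(2) x(1) xa s, where w=w] s by (simp add: psi_def)
    then show ?thesis using Bd by simp
  next
    case False
    define y where "y = p * (x + s)"
    have y: "0 \<le> y" "y < a"
    proof -
      show "0 \<le> y" unfolding y_def using p x s by simp
      have "y \<le> p * a" unfolding y_def using False p by (intro mult_left_mono) auto
      also have "\<dots> < a" using p a by simp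
      finally show "y < a" .
    qed
    have "I x s * h a - psi w lam p x a s = exp (- w * complex_of_real s) * D y"
      using inner_integral[OF lam lp(2) x(1) xa s, where w=w] s False
      by (simp add: psi_def D_def y_def algebra_simps)
    also have "norm \<dots> \<le> 1 * Bd"
      unfolding norm_mult by (intro mult_mono B y) (use w s in \<open>auto simp: mult_nonneg_nonneg\<close>)
    finally show ?thesis using False x by (simp add: indicator_def)
  qed
  have "norm (D x) \<le> (\<integral>s. norm (I x s * h a - psi w lam p x a s) \<partial>Mexp lam)"
    unfolding D_rep[OF x(1) less_imp_le[OF x(2)]] by (rule integral_norm_bound)
  also have "\<dots> \<le> (\<integral>s. Bd * indicator {..a} s \<partial>Mexp lam)"
  proof (rule integral_mono_AE[OF integrable_norm[OF di] ii])
    show "AE s in Mexp lam. norm (I x s * h a - psi w lam p x a s) \<le> Bd * indicator {..a} s"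
      using Mexp_AE_nonneg[of lam] by eventually_elim (rule pt)
  qed
  also have "\<dots> = Bd * q"
    using Mexp_le[OF lam less_imp_le[OF a]] by (simp add: q_def atMost_def)
  finally show ?thesis .
qed

lemma D_zero:
  assumes x: "0 \<le> x" "x < a"
  shows "D x = 0"
proof -
  have "bounded (h ` {0..a})"
    by (intro compact_imp_bounded compact_continuous_image continuous_on_compose2[OF HH_cont[OF lp, of UNIV]] continuous_intros) auto
  then obtain Bh where Bh: "\<And>y. y \<in> {0..a} \<Longrightarrow> norm (h y) \<le> Bh" unfolding bounded_iff by blast
  define B0 where "B0 = norm (h a) + Bh"
  have b0: "norm (D y) \<le> B0" if "0 \<le> y" "y < a" for y
  proof -
    have "norm (D y) \<le> norm (G y) * norm (h a) + norm (h y)"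
      unfolding D_def by (metis norm_mult norm_triangle_ineq4)
    also have "\<dots> \<le> 1 * norm (h a) + Bh"
      using Z_bound[OF lam _ that(1) lp(2) less_imp_le[OF a], of w] w Bh[of y] that
      by (intro add_mono mult_right_mono) auto
    finally show ?thesis by (simp add: B0_def)
  qed
  have bn: "\<forall>y. 0 \<le> y \<longrightarrow> y < a \<longrightarrow> norm (D y) \<le> B0 * q ^ n" for n
  proof (induction n)
    case 0 then show ?case using b0 by simp
  next
    case (Suc n)
    show ?case
    proof (intro allI impI)
      fix y assume "0 \<le> y" "y < a"
      have "norm (D y) \<le> B0 * q ^ n * q" by (rule D_step) (use Suc \<open>0 \<le> y\<close> \<open>y < a\<close> in auto)
      then show "norm (D y) \<le> B0 * q ^ Suc n" by (simp add: mult_ac)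
    qed
  qed
  have "(\<lambda>n. B0 * q ^ n) \<longlonglongrightarrow> B0 * 0"
    by (intro tendsto_mult tendsto_const LIMSEQ_power_zero) (use q in auto)
  then have "norm (D x) \<le> B0 * 0"
    by (rule LIMSEQ_le_const) (use bn x in auto)
  then show ?thesis by simp
qed

lemma G_h: "0 \<le> x \<Longrightarrow> x < a \<Longrightarrow> G x * h a = h x"
  using D_zero unfolding D_def by (simp add: right_minus_eq)

end

lemma h0: "HH w lam p 0 = 1"
  unfolding HH_def by (simp add: cc_def)

theorem mainTheorem1:
  fixes lam p x a :: real and w :: complex
  assumes "lam > 0" and "0 < p" and "p < 1"
    and "0 < x" and "x < a" and "Re w > 0"
  shows "Z_up lam p w x a = Z_up lam p w 0 a / Z_up lam p w 0 x
    \<and> (\<forall>y>0. Z_up lam p w 0 y =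
          1 / (1 + w * (\<Sum>n. complex_of_real (y ^ Suc n / fact (Suc n))
                    * (\<Prod>i\<in>{1..n}. w + complex_of_real lam - complex_of_real (lam * p ^ i)))))"
proof -
  have Z0: "Z_up lam p w 0 y = 1 / HH w lam p (complex_of_real y) \<and> HH w lam p (complex_of_real y) \<noteq> 0" if "0 < y" for y
  proof -
    interpret aimd_ctx lam p w y using assms that by unfold_locales auto
    have e: "Z_up lam p w 0 y * HH w lam p (complex_of_real y) = 1" using G_h[of 0] that h0 by simp
    then have hn: "HH w lam p (complex_of_real y) \<noteq> 0" by auto
    then show ?thesis using e by (simp add: eq_divide_eq)
  qed
  have wn: "w \<noteq> 0" using assms by auto
  have lp: "0 \<le> lam" "0 \<le> p" "p \<le> 1" using assms by auto
  have part2: "\<forall>y>0. Z_up lam p w 0 y =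
          1 / (1 + w * (\<Sum>n. complex_of_real (y ^ Suc n / fact (Suc n))
                    * (\<Prod>i\<in>{1..n}. w + complex_of_real lam - complex_of_real (lam * p ^ i))))"
    using Z0 HH_formula[OF lp wn] by simp
  interpret aimd_ctx lam p w a using assms by unfold_locales auto
  have 1: "Z_up lam p w x a * HH w lam p (complex_of_real a) = HH w lam p (complex_of_real x)"
    using G_h[of x] assms by simp
  have a0: "0 < a" using assms by simp
  have "Z_up lam p w x a = Z_up lam p w 0 a / Z_up lam p w 0 x"
    using Z0[OF a0] Z0[OF assms(4)] 1 by (auto simp: field_simps)
  with part2 show ?thesis by blast
qed

end
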